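(* If $G$ and $H$ are isoclinic finite groups with $|G|=|H|$, then $A_G(t)=A_H(t)$ and $B_G(t)=B_H(t)$.
   Context: For a finite group $G$ and $n\ge 0$, $G$ acts on $G^n$ by simultaneous conjugation. Let $G^{(n)}\subseteq G^n$ be the set of $n$-tuples of pairwise commuting elements. Let $\alpha_{G,n}$ (resp. $\beta_{G,n}$) be the number of $G$-orbits on $G^n$ (resp. on $G^{(n)}$), and set $A_G(t)=\sum_{n\ge0}\alpha_{G,n}t^n$, $B_G(t)=\sum_{n\ge0}\beta_{G,n}t^n$. Two finite groups $G$ and $H$ are isoclinic if there exist isomorphisms $\theta:G/Z(G)\to H/Z(H)$ and $\phi:G'\to H'$ (commutator subgroups) such that $\phi([g_1,g_2])=[h_1,h_2]$ whenever $\theta(g_iZ(G))=h_iZ(H)$, $i=1,2$. *)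

theory Defs
  imports "HOL-Algebra.Algebra" "HOL-Library.FuncSet" "HOL-Computational_Algebra.Formal_Power_Series"
begin

definition grp_center :: "('a, 'b) monoid_scheme \<Rightarrow> 'a set" where
  "grp_center G = {z \<in> carrier G. \<forall>g \<in> carrier G. z \<otimes>\<^bsub>G\<^esub> g = g \<otimes>\<^bsub>G\<^esub> z}"

definition grp_comm :: "('a, 'b) monoid_scheme \<Rightarrow> 'a \<Rightarrow> 'a \<Rightarrow> 'a" where
  "grp_comm G x y = inv\<^bsub>G\<^esub> x \<otimes>\<^bsub>G\<^esub> inv\<^bsub>G\<^esub> y \<otimes>\<^bsub>G\<^esub> x \<otimes>\<^bsub>G\<^esub> y"

definition comm_subgrp :: "('a, 'b) monoid_scheme \<Rightarrow> ('a, 'b) monoid_scheme" where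
  "comm_subgrp G = G\<lparr>carrier := derived G (carrier G)\<rparr>"

definition isoclinic :: "('a, 'b) monoid_scheme \<Rightarrow> ('c, 'd) monoid_scheme \<Rightarrow> bool" where
  "isoclinic G H \<longleftrightarrow>
     (\<exists>\<theta> \<phi>. \<theta> \<in> iso (G Mod grp_center G) (H Mod grp_center H) \<and>
            \<phi> \<in> iso (comm_subgrp G) (comm_subgrp H) \<and>
            (\<forall>g1 \<in> carrier G. \<forall>g2 \<in> carrier G. \<forall>h1 \<in> carrier H. \<forall>h2 \<in> carrier H.
               \<theta> (grp_center G #>\<^bsub>G\<^esub> g1) = grp_center H #>\<^bsub>H\<^esub> h1 \<and>
               \<theta> (grp_center G #>\<^bsub>G\<^esub> g2) = grp_center H #>\<^bsub>H\<^esub> h2 \<longrightarrow>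
               \<phi> (grp_comm G g1 g2) = grp_comm H h1 h2))"

definition tuples :: "('a, 'b) monoid_scheme \<Rightarrow> nat \<Rightarrow> (nat \<Rightarrow> 'a) set" where
  "tuples G n = {0..<n} \<rightarrow>\<^sub>E carrier G"

definition comm_tuples :: "('a, 'b) monoid_scheme \<Rightarrow> nat \<Rightarrow> (nat \<Rightarrow> 'a) set" where
  "comm_tuples G n = {x \<in> tuples G n. \<forall>i<n. \<forall>j<n. x i \<otimes>\<^bsub>G\<^esub> x j = x j \<otimes>\<^bsub>G\<^esub> x i}"

definition sim_conj :: "('a, 'b) monoid_scheme \<Rightarrow> nat \<Rightarrow> 'a \<Rightarrow> (nat \<Rightarrow> 'a) \<Rightarrow> (nat \<Rightarrow> 'a)" where
  "sim_conj G n g x = restrict (\<lambda>i. g \<otimes>\<^bsub>G\<^esub> x i \<otimes>\<^bsub>G\<^esub> inv\<^bsub>G\<^esub> g) {0..<n}"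

definition conj_orbit :: "('a, 'b) monoid_scheme \<Rightarrow> nat \<Rightarrow> (nat \<Rightarrow> 'a) \<Rightarrow> (nat \<Rightarrow> 'a) set" where
  "conj_orbit G n x = (\<lambda>g. sim_conj G n g x) ` carrier G"

definition num_orbits :: "('a, 'b) monoid_scheme \<Rightarrow> nat \<Rightarrow> (nat \<Rightarrow> 'a) set \<Rightarrow> nat" where
  "num_orbits G n S = card (image (conj_orbit G n) S)"

definition alpha :: "('a, 'b) monoid_scheme \<Rightarrow> nat \<Rightarrow> nat" where
  "alpha G n = num_orbits G n (tuples G n)"

definition beta :: "('a, 'b) monoid_scheme \<Rightarrow> nat \<Rightarrow> nat" where
  "beta G n = num_orbits G n (comm_tuples G n)"

definition A_series :: "('a, 'b) monoid_scheme \<Rightarrow> int fps" where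
  "A_series G = Abs_fps (\<lambda>n. int (alpha G n))"

definition B_series :: "('a, 'b) monoid_scheme \<Rightarrow> int fps" where
  "B_series G = Abs_fps (\<lambda>n. int (beta G n))"

end

theory Submission
  imports Defs
begin


lemma center_subgroup:
  fixes G (structure)
  assumes "group G" shows "subgroup (grp_center G) G"
proof -
  interpret group G by fact
  show ?thesis
  proof
    show "grp_center G \<subseteq> carrier G" unfolding grp_center_def by auto
  next
    fix x y assume x: "x \<in> grp_center G" and y: "y \<in> grp_center G"
    hence xc: "x \<in> carrier G" and cx: "\<forall>g\<in>carrier G. x \<otimes> g = g \<otimes> x"
      and yc: "y \<in> carrier G" and cy: "\<forall>g\<in>carrier G. y \<otimes> g = g \<otimes> y" unfolding grp_center_def by auto
    have "x \<otimes> y \<otimes> g = g \<otimes> (x \<otimes> y)" if g: "g \<in> carrier G" for g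
    proof -
      have "x \<otimes> y \<otimes> g = x \<otimes> (g \<otimes> y)" using cy g xc yc by (simp add: m_assoc)
      also have "\<dots> = (x \<otimes> g) \<otimes> y" using g xc yc by (simp add: m_assoc)
      also have "\<dots> = g \<otimes> (x \<otimes> y)" using cx g xc yc by (simp add: m_assoc)
      finally show ?thesis .
    qed
    then show "x \<otimes> y \<in> grp_center G" using xc yc unfolding grp_center_def by auto
  next
    show "\<one> \<in> grp_center G" unfolding grp_center_def by auto
  next
    fix x assume x: "x \<in> grp_center G"
    hence xc: "x \<in> carrier G" and c: "\<forall>g\<in>carrier G. x \<otimes> g = g \<otimes> x" unfolding grp_center_def by auto
    have "inv x \<otimes> g = g \<otimes> inv x" if g: "g \<in> carrier G" for g
    proof -
      have "g \<otimes> x = x \<otimes> g" using c g by auto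
      hence "inv x \<otimes> (g \<otimes> x) \<otimes> inv x = inv x \<otimes> (x \<otimes> g) \<otimes> inv x" by simp
      also have "inv x \<otimes> (x \<otimes> g) \<otimes> inv x = g \<otimes> inv x" using xc g by (simp add: m_assoc[symmetric])
      also have "inv x \<otimes> (g \<otimes> x) \<otimes> inv x = inv x \<otimes> g" using xc g by (simp add: m_assoc)
      finally show ?thesis .
    qed
    thus "inv x \<in> grp_center G" using xc unfolding grp_center_def by auto
  qed
qed

lemma comm_iff:
  fixes G (structure)
  assumes "group G" "a \<in> carrier G" "b \<in> carrier G"
  shows "(a \<otimes> b = b \<otimes> a) \<longleftrightarrow> grp_comm G a b = \<one>"
proof -
  interpret group G by fact
  have e: "grp_comm G a b = inv (b \<otimes> a) \<otimes> (a \<otimes> b)"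
    unfolding grp_comm_def using assms by (simp add: inv_mult_group m_assoc)
  show ?thesis
  proof
    assume "a \<otimes> b = b \<otimes> a" thus "grp_comm G a b = \<one>" using e assms by simp
  next
    assume "grp_comm G a b = \<one>"
    hence "inv (b \<otimes> a) \<otimes> (a \<otimes> b) = \<one>" using e by simp
    thus "a \<otimes> b = b \<otimes> a" using assms
      by (metis inv_closed m_closed inv_equality inv_inv)
  qed
qed

lemma comm_in_derived:
  fixes G (structure)
  assumes "group G" "a \<in> carrier G" "b \<in> carrier G"
  shows "grp_comm G a b \<in> derived G (carrier G)"
proof -
  interpret group G by fact
  have "grp_comm G a b = inv a \<otimes> inv b \<otimes> inv (inv a) \<otimes> inv (inv b)"
    unfolding grp_comm_def using assms by simp
  moreover have "inv a \<otimes> inv b \<otimes> inv (inv a) \<otimes> inv (inv b) \<in> derived_set G (carrier G)"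
    using assms by blast
  ultimately show ?thesis unfolding derived_def by (auto intro: generate.incl)
qed



lemma isoclinic_bij:
  assumes gG: "group G" and gH: "group H"
    and fG: "finite (carrier G)" and fH: "finite (carrier H)"
    and iso: "isoclinic G H"
    and cd: "card (carrier G) = card (carrier H)"
  shows "\<exists>f. bij_betw f (carrier G) (carrier H) \<and>
     (\<forall>a\<in>carrier G. \<forall>b\<in>carrier G. (a \<otimes>\<^bsub>G\<^esub> b = b \<otimes>\<^bsub>G\<^esub> a) \<longleftrightarrow> (f a \<otimes>\<^bsub>H\<^esub> f b = f b \<otimes>\<^bsub>H\<^esub> f a))"
proof -
  obtain \<theta> \<phi> where th: "\<theta> \<in> iso (G Mod grp_center G) (H Mod grp_center H)"
    and ph: "\<phi> \<in> iso (comm_subgrp G) (comm_subgrp H)"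
    and key: "\<And>g1 g2 h1 h2. g1 \<in> carrier G \<Longrightarrow> g2 \<in> carrier G \<Longrightarrow> h1 \<in> carrier H \<Longrightarrow> h2 \<in> carrier H \<Longrightarrow>
               \<theta> (grp_center G #>\<^bsub>G\<^esub> g1) = grp_center H #>\<^bsub>H\<^esub> h1 \<Longrightarrow>
               \<theta> (grp_center G #>\<^bsub>G\<^esub> g2) = grp_center H #>\<^bsub>H\<^esub> h2 \<Longrightarrow>
               \<phi> (grp_comm G g1 g2) = grp_comm H h1 h2"
    using iso unfolding isoclinic_def by blast
  define ZG where "ZG = grp_center G"
  define ZH where "ZH = grp_center H"
  have sG: "subgroup ZG G" unfolding ZG_def by (rule center_subgroup[OF gG])
  have sH: "subgroup ZH H" unfolding ZH_def by (rule center_subgroup[OF gH])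
  have ZGc: "ZG \<subseteq> carrier G" using sG subgroup.subset by blast
  have ZHc: "ZH \<subseteq> carrier H" using sH subgroup.subset by blast
  have thb: "bij_betw \<theta> (rcosets\<^bsub>G\<^esub> ZG) (rcosets\<^bsub>H\<^esub> ZH)"
    using th unfolding iso_def FactGroup_def ZG_def ZH_def by simp
  have lG: "card (rcosets\<^bsub>G\<^esub> ZG) * card ZG = card (carrier G)"
    using group.lagrange[OF gG sG] unfolding order_def .
  have lH: "card (rcosets\<^bsub>H\<^esub> ZH) * card ZH = card (carrier H)"
    using group.lagrange[OF gH sH] unfolding order_def .
  have crc: "card (rcosets\<^bsub>G\<^esub> ZG) = card (rcosets\<^bsub>H\<^esub> ZH)" using thb bij_betw_same_card by blast
  have "carrier G \<noteq> {}" using group.subgroup_self[OF gG] subgroup.one_closed by blast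
  hence "card (carrier G) > 0" using fG by auto
  hence "card (rcosets\<^bsub>G\<^esub> ZG) > 0" using lG by (metis gr0I mult_0)
  hence cZ: "card ZG = card ZH" using lG lH crc cd by (metis mult_left_cancel not_less0)
  have rcG: "C \<subseteq> carrier G" if "C \<in> rcosets\<^bsub>G\<^esub> ZG" for C
    using that ZGc monoid.r_coset_subset_G[OF group.is_monoid[OF gG]] unfolding RCOSETS_def by blast
  have rcH: "C \<subseteq> carrier H" if "C \<in> rcosets\<^bsub>H\<^esub> ZH" for C
    using that ZHc monoid.r_coset_subset_G[OF group.is_monoid[OF gH]] unfolding RCOSETS_def by blast
  have "\<forall>C\<in>rcosets\<^bsub>G\<^esub> ZG. \<exists>h. bij_betw h C (\<theta> C)"
  proof
    fix C assume C: "C \<in> rcosets\<^bsub>G\<^esub> ZG"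
    have tC: "\<theta> C \<in> rcosets\<^bsub>H\<^esub> ZH" using thb C bij_betwE by blast
    have "card C = card ZG" using group.card_rcosets_equal[OF gG C ZGc] by simp
    moreover have "card (\<theta> C) = card ZH" using group.card_rcosets_equal[OF gH tC ZHc] by simp
    moreover have "finite C" using rcG[OF C] fG finite_subset by blast
    moreover have "finite (\<theta> C)" using rcH[OF tC] fH finite_subset by blast
    ultimately show "\<exists>h. bij_betw h C (\<theta> C)" using cZ finite_same_card_bij by metis
  qed
  then obtain b where b: "\<And>C. C \<in> rcosets\<^bsub>G\<^esub> ZG \<Longrightarrow> bij_betw (b C) C (\<theta> C)" by metis
  define f where "f g = b (ZG #>\<^bsub>G\<^esub> g) g" for g
  have K: "f g \<in> carrier H \<and> \<theta> (ZG #>\<^bsub>G\<^esub> g) = ZH #>\<^bsub>H\<^esub> f g \<and> ZG #>\<^bsub>G\<^esub> g \<in> rcosets\<^bsub>G\<^esub> ZG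
      \<and> g \<in> ZG #>\<^bsub>G\<^esub> g" if g: "g \<in> carrier G" for g
  proof -
    have C: "ZG #>\<^bsub>G\<^esub> g \<in> rcosets\<^bsub>G\<^esub> ZG" using group.rcosetsI[OF gG ZGc g] .
    have gC: "g \<in> ZG #>\<^bsub>G\<^esub> g" using group.rcos_self[OF gG g sG] .
    have fC: "f g \<in> \<theta> (ZG #>\<^bsub>G\<^esub> g)" unfolding f_def using b[OF C] gC bij_betwE by blast
    have tC: "\<theta> (ZG #>\<^bsub>G\<^esub> g) \<in> rcosets\<^bsub>H\<^esub> ZH" using thb C bij_betwE by blast
    then obtain h where h: "h \<in> carrier H" "\<theta> (ZG #>\<^bsub>G\<^esub> g) = ZH #>\<^bsub>H\<^esub> h" unfolding RCOSETS_def by blast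
    have fc: "f g \<in> carrier H" using fC rcH[OF tC] by blast
    have "ZH #>\<^bsub>H\<^esub> h = ZH #>\<^bsub>H\<^esub> f g" using group.repr_independence[OF gH _ h(1) sH] fC h(2) by simp
    thus ?thesis using fc h C gC by simp
  qed
  have inj: "inj_on f (carrier G)"
  proof
    fix x y assume x: "x \<in> carrier G" and y: "y \<in> carrier G" and e: "f x = f y"
    have "\<theta> (ZG #>\<^bsub>G\<^esub> x) = \<theta> (ZG #>\<^bsub>G\<^esub> y)" using K[OF x] K[OF y] e by simp
    hence eC: "ZG #>\<^bsub>G\<^esub> x = ZG #>\<^bsub>G\<^esub> y" using thb K[OF x] K[OF y] unfolding bij_betw_def inj_on_def by blast
    have "b (ZG #>\<^bsub>G\<^esub> x) x = b (ZG #>\<^bsub>G\<^esub> x) y" using e eC unfolding f_def by simp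
    moreover have "inj_on (b (ZG #>\<^bsub>G\<^esub> x)) (ZG #>\<^bsub>G\<^esub> x)" using b K[OF x] bij_betw_def by blast
    ultimately show "x = y" using K[OF x] K[OF y] eC unfolding inj_on_def by blast
  qed
  have img: "f ` carrier G = carrier H"
  proof (rule card_subset_eq[OF fH])
    show "f ` carrier G \<subseteq> carrier H" using K by blast
    show "card (f ` carrier G) = card (carrier H)" using card_image[OF inj] cd by simp
  qed
  have bij: "bij_betw f (carrier G) (carrier H)" using inj img bij_betw_def by blast
  have gcG: "group (comm_subgrp G)" unfolding comm_subgrp_def
    using subgroup.subgroup_is_group[OF group.derived_is_subgroup[OF gG] gG] by simp
  have gcH: "group (comm_subgrp H)" unfolding comm_subgrp_def
    using subgroup.subgroup_is_group[OF group.derived_is_subgroup[OF gH] gH] by simp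
  have ph1: "\<phi> \<one>\<^bsub>G\<^esub> = \<one>\<^bsub>H\<^esub>"
  proof -
    interpret gh: group_hom "comm_subgrp G" "comm_subgrp H" \<phi>
      using gcG gcH ph unfolding group_hom_def group_hom_axioms_def iso_def by blast
    show ?thesis using gh.hom_one unfolding comm_subgrp_def by simp
  qed
  have phi: "inj_on \<phi> (derived G (carrier G))"
    using ph unfolding iso_def bij_betw_def comm_subgrp_def by simp
  have oneD: "\<one>\<^bsub>G\<^esub> \<in> derived G (carrier G)"
    using subgroup.one_closed[OF group.derived_is_subgroup[OF gG]] by blast
  have comm: "(a \<otimes>\<^bsub>G\<^esub> b' = b' \<otimes>\<^bsub>G\<^esub> a) \<longleftrightarrow> (f a \<otimes>\<^bsub>H\<^esub> f b' = f b' \<otimes>\<^bsub>H\<^esub> f a)"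
    if a: "a \<in> carrier G" and bb: "b' \<in> carrier G" for a b'
  proof -
    have e: "\<phi> (grp_comm G a b') = grp_comm H (f a) (f b')"
      using key[OF a bb] K[OF a] K[OF bb] unfolding ZG_def ZH_def by blast
    have "(a \<otimes>\<^bsub>G\<^esub> b' = b' \<otimes>\<^bsub>G\<^esub> a) \<longleftrightarrow> grp_comm G a b' = \<one>\<^bsub>G\<^esub>" using comm_iff[OF gG a bb] .
    also have "\<dots> \<longleftrightarrow> \<phi> (grp_comm G a b') = \<phi> \<one>\<^bsub>G\<^esub>"
      using phi comm_in_derived[OF gG a bb] oneD unfolding inj_on_def by metis
    also have "\<dots> \<longleftrightarrow> grp_comm H (f a) (f b') = \<one>\<^bsub>H\<^esub>" using e ph1 by simp
    also have "\<dots> \<longleftrightarrow> (f a \<otimes>\<^bsub>H\<^esub> f b' = f b' \<otimes>\<^bsub>H\<^esub> f a)" using comm_iff[OF gH] K[OF a] K[OF bb] by simp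
    finally show ?thesis .
  qed
  show ?thesis using bij comm by blast
qed



definition stab :: "('a, 'b) monoid_scheme \<Rightarrow> nat \<Rightarrow> (nat \<Rightarrow> 'a) \<Rightarrow> 'a set" where
  "stab G n x = {g \<in> carrier G. sim_conj G n g x = x}"

lemma act_closed:
  fixes G (structure)
  assumes "group G" "g \<in> carrier G" "x \<in> tuples G n"
  shows "sim_conj G n g x \<in> tuples G n"
proof -
  interpret group G by fact
  show ?thesis using assms unfolding sim_conj_def tuples_def by (auto simp: PiE_iff)
qed

lemma act_one:
  fixes G (structure)
  assumes "group G" "x \<in> tuples G n"
  shows "sim_conj G n \<one> x = x"
proof -
  interpret group G by fact
  show ?thesis using assms unfolding sim_conj_def tuples_def
    by (auto simp: PiE_iff restrict_def extensional_def fun_eq_iff)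
qed

lemma act_mult:
  fixes G (structure)
  assumes "group G" "a \<in> carrier G" "b \<in> carrier G" "x \<in> tuples G n"
  shows "sim_conj G n (a \<otimes> b) x = sim_conj G n a (sim_conj G n b x)"
proof -
  interpret group G by fact
  show ?thesis using assms unfolding sim_conj_def tuples_def
    by (auto simp: PiE_iff restrict_def fun_eq_iff inv_mult_group m_assoc)
qed

lemma act_comm_closed:
  fixes G (structure)
  assumes "group G" "g \<in> carrier G" "x \<in> comm_tuples G n"
  shows "sim_conj G n g x \<in> comm_tuples G n"
proof -
  interpret group G by fact
  have xt: "x \<in> tuples G n" and xc: "\<forall>i<n. \<forall>j<n. x i \<otimes> x j = x j \<otimes> x i"
    using assms unfolding comm_tuples_def by auto
  have xi: "x i \<in> carrier G" if "i < n" for i using xt that unfolding tuples_def by auto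
  have "(g \<otimes> x i \<otimes> inv g) \<otimes> (g \<otimes> x j \<otimes> inv g) = (g \<otimes> x j \<otimes> inv g) \<otimes> (g \<otimes> x i \<otimes> inv g)"
    if "i < n" "j < n" for i j
  proof -
    have "(g \<otimes> x i \<otimes> inv g) \<otimes> (g \<otimes> x j \<otimes> inv g) = g \<otimes> (x i \<otimes> x j) \<otimes> inv g"
      using xi that assms(2) by (simp add: m_assoc[symmetric]) (simp add: m_assoc)
    also have "\<dots> = g \<otimes> (x j \<otimes> x i) \<otimes> inv g" using xc that by simp
    also have "\<dots> = (g \<otimes> x j \<otimes> inv g) \<otimes> (g \<otimes> x i \<otimes> inv g)"
      using xi that assms(2) by (simp add: m_assoc[symmetric]) (simp add: m_assoc)
    finally show ?thesis .
  qed
  thus ?thesis using act_closed[OF assms(1,2) xt] unfolding comm_tuples_def sim_conj_def by auto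
qed

lemma stab_iff:
  fixes G (structure)
  assumes "group G" "g \<in> carrier G" "x \<in> tuples G n"
  shows "sim_conj G n g x = x \<longleftrightarrow> (\<forall>i<n. g \<otimes> x i = x i \<otimes> g)"
proof -
  interpret group G by fact
  have xi: "x i \<in> carrier G" if "i < n" for i using assms(3) that unfolding tuples_def by auto
  have e1: "sim_conj G n g x = x \<longleftrightarrow> (\<forall>i<n. g \<otimes> x i \<otimes> inv g = x i)"
    using assms(3) unfolding sim_conj_def tuples_def
    by (auto simp: PiE_iff restrict_def extensional_def fun_eq_iff)
  have e2: "g \<otimes> y \<otimes> inv g = y \<longleftrightarrow> g \<otimes> y = y \<otimes> g" if y: "y \<in> carrier G" for y
  proof
    assume "g \<otimes> y \<otimes> inv g = y"
    hence "g \<otimes> y \<otimes> inv g \<otimes> g = y \<otimes> g" by simp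
    thus "g \<otimes> y = y \<otimes> g" using y assms(2) by (simp add: m_assoc)
  next
    assume "g \<otimes> y = y \<otimes> g"
    thus "g \<otimes> y \<otimes> inv g = y" using y assms(2) by (simp add: m_assoc)
  qed
  show ?thesis using e1 e2 xi by auto
qed

lemma orbit_stabilizer:
  fixes G (structure)
  assumes gG: "group G" and fin: "finite (carrier G)" and xt: "x \<in> tuples G n"
  shows "card (conj_orbit G n x) * card (stab G n x) = card (carrier G)"
proof -
  interpret group G by fact
  define act where "act g = sim_conj G n g x" for g
  have "card (carrier G) = (\<Sum>g\<in>carrier G. 1)" by simp
  also have "\<dots> = (\<Sum>y\<in>act ` carrier G. \<Sum>g\<in>{g\<in>carrier G. act g = y}. 1)"
    using sum.image_gen[OF fin, of "\<lambda>_. 1::nat" act] .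
  also have "\<dots> = (\<Sum>y\<in>act ` carrier G. card (stab G n x))"
  proof (rule sum.cong[OF refl])
    fix y assume "y \<in> act ` carrier G"
    then obtain g0 where g0: "g0 \<in> carrier G" "y = act g0" by blast
    have eq: "{g\<in>carrier G. act g = y} = (\<lambda>s. g0 \<otimes> s) ` stab G n x"
    proof (intro equalityI subsetI)
      fix g assume g: "g \<in> {g\<in>carrier G. act g = y}"
      hence gc: "g \<in> carrier G" and ag: "act g = act g0" using g0 by auto
      have "act (inv g0 \<otimes> g) = sim_conj G n (inv g0) (act g)"
        unfolding act_def using act_mult[OF gG _ gc xt] g0 by simp
      also have "\<dots> = sim_conj G n (inv g0) (act g0)" using ag by simp
      also have "\<dots> = x"
      proof -
        have "sim_conj G n (inv g0) (act g0) = sim_conj G n (inv g0 \<otimes> g0) x"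
          unfolding act_def using act_mult[OF gG inv_closed[OF g0(1)] g0(1) xt] by simp
        thus ?thesis using act_one[OF gG xt] g0 by simp
      qed
      finally have "inv g0 \<otimes> g \<in> stab G n x" unfolding stab_def act_def using gc g0 by simp
      moreover have "g = g0 \<otimes> (inv g0 \<otimes> g)" using gc g0 by (simp add: m_assoc[symmetric])
      ultimately show "g \<in> (\<lambda>s. g0 \<otimes> s) ` stab G n x" by blast
    next
      fix g assume "g \<in> (\<lambda>s. g0 \<otimes> s) ` stab G n x"
      then obtain s where s: "s \<in> carrier G" "sim_conj G n s x = x" "g = g0 \<otimes> s" unfolding stab_def by blast
      have "act g = act g0" unfolding act_def using act_mult[OF gG g0(1) s(1) xt] s by simp
      thus "g \<in> {g\<in>carrier G. act g = y}" using s g0 by auto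
    qed
    have "inj_on (\<lambda>s. g0 \<otimes> s) (stab G n x)" unfolding stab_def inj_on_def using g0 by auto
    hence "card ((\<lambda>s. g0 \<otimes> s) ` stab G n x) = card (stab G n x)" by (rule card_image)
    thus "(\<Sum>g\<in>{g\<in>carrier G. act g = y}. 1) = card (stab G n x)" using eq by simp
  qed
  also have "\<dots> = card (conj_orbit G n x) * card (stab G n x)"
    unfolding conj_orbit_def act_def by simp
  finally show ?thesis by simp
qed

lemma orbit_self:
  fixes G (structure)
  assumes "group G" "x \<in> tuples G n"
  shows "x \<in> conj_orbit G n x"
  using act_one[OF assms] group.subgroup_self[OF assms(1)] subgroup.one_closed
  unfolding conj_orbit_def by (metis image_eqI)

lemma orbit_eq:
  fixes G (structure)
  assumes gG: "group G" and xt: "x \<in> tuples G n" and y: "y \<in> conj_orbit G n x"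
  shows "conj_orbit G n y = conj_orbit G n x"
proof -
  interpret group G by fact
  obtain g0 where g0: "g0 \<in> carrier G" "y = sim_conj G n g0 x" using y unfolding conj_orbit_def by blast
  show ?thesis
  proof (intro equalityI subsetI)
    fix z assume "z \<in> conj_orbit G n y"
    then obtain g where g: "g \<in> carrier G" "z = sim_conj G n g y" unfolding conj_orbit_def by blast
    hence "z = sim_conj G n (g \<otimes> g0) x" using act_mult[OF gG g(1) g0(1) xt] g0 by simp
    thus "z \<in> conj_orbit G n x" unfolding conj_orbit_def using g g0 by blast
  next
    fix z assume "z \<in> conj_orbit G n x"
    then obtain g where g: "g \<in> carrier G" "z = sim_conj G n g x" unfolding conj_orbit_def by blast
    have "sim_conj G n (g \<otimes> inv g0) y = sim_conj G n (g \<otimes> inv g0 \<otimes> g0) x"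
      using act_mult[OF gG _ g0(1) xt, of "g \<otimes> inv g0"] g g0 by simp
    also have "g \<otimes> inv g0 \<otimes> g0 = g" using g g0 by (simp add: m_assoc)
    finally show "z \<in> conj_orbit G n y" unfolding conj_orbit_def using g g0
      by (metis image_eqI inv_closed m_closed)
  qed
qed

lemma orbit_count:
  fixes G (structure) and XS :: "(nat \<Rightarrow> 'a) set"
  assumes gG: "group G" and fin: "finite (carrier G)" and Xt: "XS \<subseteq> tuples G n"
    and stable: "\<And>g x. g \<in> carrier G \<Longrightarrow> x \<in> XS \<Longrightarrow> sim_conj G n g x \<in> XS"
  shows "card (carrier G) * num_orbits G n XS = (\<Sum>x\<in>XS. card (stab G n x))"
proof -
  have finT: "finite (tuples G n)" unfolding tuples_def using fin by (simp add: finite_PiE)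
  hence finX: "finite XS" using Xt finite_subset by blast
  have "(\<Sum>x\<in>XS. card (stab G n x)) =
        (\<Sum>Orb\<in>conj_orbit G n ` XS. \<Sum>x\<in>{x\<in>XS. conj_orbit G n x = Orb}. card (stab G n x))"
    using sum.image_gen[OF finX] .
  also have "\<dots> = (\<Sum>Orb\<in>conj_orbit G n ` XS. card (carrier G))"
  proof (rule sum.cong[OF refl])
    fix Orb assume "Orb \<in> conj_orbit G n ` XS"
    then obtain x0 where x0: "x0 \<in> XS" "Orb = conj_orbit G n x0" by blast
    have x0t: "x0 \<in> tuples G n" using x0 Xt by blast
    have set: "{x\<in>XS. conj_orbit G n x = Orb} = Orb"
    proof (intro equalityI subsetI)
      fix x assume "x \<in> {x\<in>XS. conj_orbit G n x = Orb}"
      thus "x \<in> Orb" using orbit_self[OF gG] Xt by blast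
    next
      fix x assume x: "x \<in> Orb"
      hence "x \<in> XS" using x0 stable unfolding conj_orbit_def by blast
      thus "x \<in> {x\<in>XS. conj_orbit G n x = Orb}" using orbit_eq[OF gG x0t] x x0 by simp
    qed
    have finO: "finite Orb" using x0 unfolding conj_orbit_def using fin by simp
    have pos: "card Orb > 0" using orbit_self[OF gG x0t] x0 finO card_gt_0_iff by blast
    have "card Orb * (\<Sum>x\<in>Orb. card (stab G n x)) = (\<Sum>x\<in>Orb. card (conj_orbit G n x) * card (stab G n x))"
      using orbit_eq[OF gG x0t] x0 by (simp add: sum_distrib_left)
    also have "\<dots> = (\<Sum>x\<in>Orb. card (carrier G))"
    proof (rule sum.cong[OF refl])
      fix x assume "x \<in> Orb"
      hence "x \<in> XS" using x0 stable unfolding conj_orbit_def by blast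
      thus "card (conj_orbit G n x) * card (stab G n x) = card (carrier G)"
        using orbit_stabilizer[OF gG fin] Xt by blast
    qed
    also have "\<dots> = card Orb * card (carrier G)" by simp
    finally have "(\<Sum>x\<in>Orb. card (stab G n x)) = card (carrier G)" using pos by simp
    thus "(\<Sum>x\<in>{x\<in>XS. conj_orbit G n x = Orb}. card (stab G n x)) = card (carrier G)" using set by simp
  qed
  also have "\<dots> = card (carrier G) * num_orbits G n XS" unfolding num_orbits_def by simp
  finally show ?thesis by simp
qed



lemma transfer:
  assumes gG: "group G" and gH: "group H"
    and bij: "bij_betw f (carrier G) (carrier H)"
    and comm: "\<forall>a\<in>carrier G. \<forall>b\<in>carrier G. (a \<otimes>\<^bsub>G\<^esub> b = b \<otimes>\<^bsub>G\<^esub> a) \<longleftrightarrow> (f a \<otimes>\<^bsub>H\<^esub> f b = f b \<otimes>\<^bsub>H\<^esub> f a)"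
  shows "(\<Sum>x\<in>tuples G n. card (stab G n x)) = (\<Sum>y\<in>tuples H n. card (stab H n y))"
    and "(\<Sum>x\<in>comm_tuples G n. card (stab G n x)) = (\<Sum>y\<in>comm_tuples H n. card (stab H n y))"
proof -
  define F where "F x = restrict (\<lambda>i. f (x i)) {0..<n}" for x
  define f' where "f' = inv_into (carrier G) f"
  define F' where "F' y = restrict (\<lambda>i. f' (y i)) {0..<n}" for y
  have inj: "inj_on f (carrier G)" and img: "f ` carrier G = carrier H" using bij unfolding bij_betw_def by auto
  have ff': "f (f' h) = h" if "h \<in> carrier H" for h unfolding f'_def using that img f_inv_into_f by metis
  have f'f: "f' (f g) = g" if "g \<in> carrier G" for g unfolding f'_def using that inj inv_into_f_f by metis
  have f'c: "f' h \<in> carrier G" if "h \<in> carrier H" for h unfolding f'_def using that img inv_into_into by metis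
  have fc: "f g \<in> carrier H" if "g \<in> carrier G" for g using that img by blast
  have FT: "bij_betw F (tuples G n) (tuples H n)"
  proof (rule bij_betw_byWitness[where f'=F'])
    show "\<forall>x\<in>tuples G n. F' (F x) = x"
      unfolding F_def F'_def tuples_def using f'f by (auto simp: PiE_iff fun_eq_iff extensional_def)
    show "\<forall>y\<in>tuples H n. F (F' y) = y"
      unfolding F_def F'_def tuples_def using ff' by (auto simp: PiE_iff fun_eq_iff extensional_def)
    show "F ` tuples G n \<subseteq> tuples H n"
      unfolding F_def tuples_def using fc by (auto simp: PiE_iff)
    show "F' ` tuples H n \<subseteq> tuples G n"
      unfolding F'_def tuples_def using f'c by (auto simp: PiE_iff)
  qed
  have Fi: "F x i = f (x i)" if "i < n" for x i unfolding F_def using that by simp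
  have xi: "x i \<in> carrier G" if "x \<in> tuples G n" "i < n" for x i using that unfolding tuples_def by auto
  have stabeq: "card (stab G n x) = card (stab H n (F x))" if x: "x \<in> tuples G n" for x
  proof -
    have Fx: "F x \<in> tuples H n" using FT x bij_betwE by blast
    have mem: "g \<in> stab G n x \<longleftrightarrow> f g \<in> stab H n (F x)" if g: "g \<in> carrier G" for g
    proof -
      have "g \<in> stab G n x \<longleftrightarrow> (\<forall>i<n. g \<otimes>\<^bsub>G\<^esub> x i = x i \<otimes>\<^bsub>G\<^esub> g)"
        unfolding stab_def using stab_iff[OF gG g x] g by simp
      also have "\<dots> \<longleftrightarrow> (\<forall>i<n. f g \<otimes>\<^bsub>H\<^esub> F x i = F x i \<otimes>\<^bsub>H\<^esub> f g)"
        using comm g xi[OF x] Fi by simp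
      also have "\<dots> \<longleftrightarrow> f g \<in> stab H n (F x)"
        unfolding stab_def using stab_iff[OF gH fc[OF g] Fx] fc[OF g] by simp
      finally show ?thesis .
    qed
    have "f ` stab G n x = stab H n (F x)"
    proof (intro equalityI subsetI)
      fix h assume "h \<in> f ` stab G n x"
      then obtain g where "g \<in> stab G n x" "h = f g" by blast
      thus "h \<in> stab H n (F x)" using mem unfolding stab_def by auto
    next
      fix h assume h: "h \<in> stab H n (F x)"
      hence hc: "h \<in> carrier H" unfolding stab_def by auto
      hence "f' h \<in> stab G n x" using mem[OF f'c[OF hc]] ff'[OF hc] h by simp
      thus "h \<in> f ` stab G n x" using ff'[OF hc] by (metis image_eqI)
    qed
    moreover have "inj_on f (stab G n x)" using inj unfolding stab_def by (rule inj_on_subset) auto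
    ultimately show ?thesis using card_image by metis
  qed
  show "(\<Sum>x\<in>tuples G n. card (stab G n x)) = (\<Sum>y\<in>tuples H n. card (stab H n y))"
    using sum.reindex_bij_betw[OF FT, of "\<lambda>y. card (stab H n y)"] stabeq by simp
  have cm: "x \<in> comm_tuples G n \<longleftrightarrow> F x \<in> comm_tuples H n" if x: "x \<in> tuples G n" for x
  proof -
    have Fx: "F x \<in> tuples H n" using FT x bij_betwE by blast
    have "x \<in> comm_tuples G n \<longleftrightarrow> (\<forall>i<n. \<forall>j<n. x i \<otimes>\<^bsub>G\<^esub> x j = x j \<otimes>\<^bsub>G\<^esub> x i)"
      unfolding comm_tuples_def using x by simp
    also have "\<dots> \<longleftrightarrow> (\<forall>i<n. \<forall>j<n. F x i \<otimes>\<^bsub>H\<^esub> F x j = F x j \<otimes>\<^bsub>H\<^esub> F x i)"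
      using comm xi[OF x] Fi by simp
    also have "\<dots> \<longleftrightarrow> F x \<in> comm_tuples H n" unfolding comm_tuples_def using Fx by simp
    finally show ?thesis .
  qed
  have CT: "bij_betw F (comm_tuples G n) (comm_tuples H n)"
  proof (rule bij_betw_subset[OF FT])
    show "comm_tuples G n \<subseteq> tuples G n" unfolding comm_tuples_def by auto
    show "F ` comm_tuples G n = comm_tuples H n"
    proof (intro equalityI subsetI)
      fix y assume "y \<in> F ` comm_tuples G n"
      thus "y \<in> comm_tuples H n" using cm unfolding comm_tuples_def by auto
    next
      fix y assume y: "y \<in> comm_tuples H n"
      hence "y \<in> tuples H n" unfolding comm_tuples_def by auto
      then obtain x where x: "x \<in> tuples G n" "y = F x" using FT unfolding bij_betw_def by blast
      thus "y \<in> F ` comm_tuples G n" using cm[OF x(1)] y by blast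
    qed
  qed
  show "(\<Sum>x\<in>comm_tuples G n. card (stab G n x)) = (\<Sum>y\<in>comm_tuples H n. card (stab H n y))"
    using sum.reindex_bij_betw[OF CT, of "\<lambda>y. card (stab H n y)"] stabeq
    unfolding comm_tuples_def by simp
qed

theorem corollary4p4:
  fixes G :: "('a, 'b) monoid_scheme" and H :: "('c, 'd) monoid_scheme"
  assumes "group G" and "group H"
    and "finite (carrier G)" and "finite (carrier H)"
    and "isoclinic G H"
    and "card (carrier G) = card (carrier H)"
  shows "A_series G = A_series H \<and> B_series G = B_series H"
proof -
  obtain f where bij: "bij_betw f (carrier G) (carrier H)" and
    comm: "\<forall>a\<in>carrier G. \<forall>b\<in>carrier G. (a \<otimes>\<^bsub>G\<^esub> b = b \<otimes>\<^bsub>G\<^esub> a) \<longleftrightarrow> (f a \<otimes>\<^bsub>H\<^esub> f b = f b \<otimes>\<^bsub>H\<^esub> f a)"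
    using isoclinic_bij[OF assms] by blast
  have "carrier G \<noteq> {}" using group.subgroup_self[OF assms(1)] subgroup.one_closed by blast
  hence pos: "card (carrier G) > 0" using assms(3) by auto
  have tG: "\<And>g x. g \<in> carrier G \<Longrightarrow> x \<in> tuples G n \<Longrightarrow> sim_conj G n g x \<in> tuples G n" for n
    using act_closed[OF assms(1)] by blast
  have tH: "\<And>g x. g \<in> carrier H \<Longrightarrow> x \<in> tuples H n \<Longrightarrow> sim_conj H n g x \<in> tuples H n" for n
    using act_closed[OF assms(2)] by blast
  have cG: "\<And>g x. g \<in> carrier G \<Longrightarrow> x \<in> comm_tuples G n \<Longrightarrow> sim_conj G n g x \<in> comm_tuples G n" for n
    using act_comm_closed[OF assms(1)] by blast
  have cH: "\<And>g x. g \<in> carrier H \<Longrightarrow> x \<in> comm_tuples H n \<Longrightarrow> sim_conj H n g x \<in> comm_tuples H n" for n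
    using act_comm_closed[OF assms(2)] by blast
  have ctG: "comm_tuples G n \<subseteq> tuples G n" for n unfolding comm_tuples_def by auto
  have ctH: "comm_tuples H n \<subseteq> tuples H n" for n unfolding comm_tuples_def by auto
  have a: "alpha G n = alpha H n" for n
  proof -
    have "card (carrier G) * alpha G n = card (carrier H) * alpha H n"
      unfolding alpha_def
      using orbit_count[OF assms(1) assms(3) subset_refl tG] orbit_count[OF assms(2) assms(4) subset_refl tH]
        transfer(1)[OF assms(1,2) bij comm] by simp
    thus ?thesis using pos assms(6) by simp
  qed
  have b: "beta G n = beta H n" for n
  proof -
    have "card (carrier G) * beta G n = card (carrier H) * beta H n"
      unfolding beta_def
      using orbit_count[OF assms(1) assms(3) ctG cG] orbit_count[OF assms(2) assms(4) ctH cH]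
        transfer(2)[OF assms(1,2) bij comm] by simp
    thus ?thesis using pos assms(6) by simp
  qed
  show ?thesis unfolding A_series_def B_series_def using a b by simp
qed

end
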